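(* For every compact set $V\subset\mathcal{A}_0$, $$\mathrm{bor}(V^* )=V^*\setminus(\mathrm{cm}(V))^T.$$
   Context: $D=\{z:|z|<1\}$, $\overline D$ its closure. $\mathcal{A}$ is the space of functions $f(z)=\sum_{k\ge0}a_k(f)z^k$ analytic in $D$, with the topology of locally uniform convergence; $\mathcal{A}_0=\{f\in\mathcal{A}: a_0(f)=1\}$. $\mathcal{A}(\overline D)$ is the set of functions analytic in some disk $\{|z|<R\}$ with $R>1$, and $\mathcal{A}_0(\overline D)=\{g\in\mathcal{A}(\overline D):a_0(g)=1\}$. The Hadamard product is $(f*g)(z)=\sum_{k\ge0}a_k(f)a_k(g)z^k$. For $V\subset\mathcal{A}_0$, $V^*=\{g\in\mathcal{A}_0:(f*g)(z)\ne0 \ \forall z\in D,\ \forall f\in V\}$ and $V^T=\{g\in\mathcal{A}_0(\overline D): (f*g)(1)\ne0 \ \forall f\in V\}$. For $x\in\overline D$, $(P_xf)(z)=f(xz)$, and $\mathrm{cm}(V)=\{P_xf:f\in V,\ x\in\overline D\}$. Let $e\equiv1$. For $W\subset\mathcal{A}_0$ with $W\ne\{e\}$, $f\in W$ is a border element of $W$ if whenever $f=P_xg$ with $g\in W$, $x\in\overline D$, then $|x|=1$; $\mathrm{bor}(W)$ is the set of border elements; if $W=\{e\}$, $\mathrm{bor}(W)=\{e\}$. *)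

theory Defs
  imports "HOL-Analysis.Analysis"
begin

text \<open>An analytic function f(z) = sum a_k z^k is represented by its Taylor
  coefficient sequence a :: nat => complex.\<close>

definition ev :: "(nat \<Rightarrow> complex) \<Rightarrow> complex \<Rightarrow> complex" where
  "ev a z = (\<Sum>k. a k * z ^ k)"

definition AD :: "(nat \<Rightarrow> complex) set" where
  "AD = {a. \<forall>z. norm z < 1 \<longrightarrow> summable (\<lambda>k. a k * z ^ k)}"

definition A0 :: "(nat \<Rightarrow> complex) set" where
  "A0 = {a \<in> AD. a 0 = 1}"

definition AcD :: "(nat \<Rightarrow> complex) set" where
  "AcD = {a. \<exists>R>1. \<forall>z. norm z < R \<longrightarrow> summable (\<lambda>k. a k * z ^ k)}"

definition A0cD :: "(nat \<Rightarrow> complex) set" where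
  "A0cD = {a \<in> AcD. a 0 = 1}"

text \<open>Topology of locally uniform convergence on D (carrier AD).\<close>
definition LU :: "(nat \<Rightarrow> complex) topology" where
  "LU = topology (\<lambda>U. U \<subseteq> AD \<and>
      (\<forall>f\<in>U. \<exists>r<1. \<exists>\<epsilon>>0. \<forall>g\<in>AD.
         (\<forall>z. norm z \<le> r \<longrightarrow> norm (ev g z - ev f z) < \<epsilon>) \<longrightarrow> g \<in> U))"

definition hada :: "(nat \<Rightarrow> complex) \<Rightarrow> (nat \<Rightarrow> complex) \<Rightarrow> (nat \<Rightarrow> complex)" where
  "hada f g = (\<lambda>k. f k * g k)"

definition dual_star :: "(nat \<Rightarrow> complex) set \<Rightarrow> (nat \<Rightarrow> complex) set" where
  "dual_star V = {g \<in> A0. \<forall>f\<in>V. \<forall>z. norm z < 1 \<longrightarrow> ev (hada f g) z \<noteq> 0}"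

definition dual_T :: "(nat \<Rightarrow> complex) set \<Rightarrow> (nat \<Rightarrow> complex) set" where
  "dual_T V = {g \<in> A0cD. \<forall>f\<in>V. ev (hada f g) 1 \<noteq> 0}"

text \<open>(P_x f)(z) = f(xz), on coefficients.\<close>
definition Px :: "complex \<Rightarrow> (nat \<Rightarrow> complex) \<Rightarrow> (nat \<Rightarrow> complex)" where
  "Px x f = (\<lambda>k. f k * x ^ k)"

definition cm :: "(nat \<Rightarrow> complex) set \<Rightarrow> (nat \<Rightarrow> complex) set" where
  "cm V = {Px x f | f x. f \<in> V \<and> norm x \<le> 1}"

definition one_fn :: "nat \<Rightarrow> complex" where
  "one_fn = (\<lambda>k. if k = 0 then 1 else 0)"

definition bor :: "(nat \<Rightarrow> complex) set \<Rightarrow> (nat \<Rightarrow> complex) set" where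
  "bor W = (if W = {one_fn} then {one_fn}
            else {f \<in> W. \<forall>g\<in>W. \<forall>x. norm x \<le> 1 \<longrightarrow> f = Px x g \<longrightarrow> norm x = 1})"

end

theory Submission
  imports Defs "HOL-Complex_Analysis.Complex_Analysis"
begin

lemma openin_LU: "openin LU U \<longleftrightarrow> U \<subseteq> AD \<and>
      (\<forall>f\<in>U. \<exists>r<1. \<exists>\<epsilon>>0. \<forall>g\<in>AD.
         (\<forall>z. norm z \<le> r \<longrightarrow> norm (ev g z - ev f z) < \<epsilon>) \<longrightarrow> g \<in> U)"
proof -
  have "istopology (\<lambda>U. U \<subseteq> AD \<and>
      (\<forall>f\<in>U. \<exists>r<1. \<exists>\<epsilon>>0. \<forall>g\<in>AD.
         (\<forall>z. norm z \<le> r \<longrightarrow> norm (ev g z - ev f z) < \<epsilon>) \<longrightarrow> g \<in> U))"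
    unfolding istopology_def
  proof (rule conjI; intro allI impI)
    fix S T :: "(nat \<Rightarrow> complex) set"
    assume S: "S \<subseteq> AD \<and> (\<forall>f\<in>S. \<exists>r<1. \<exists>\<epsilon>>0. \<forall>g\<in>AD.
         (\<forall>z. norm z \<le> r \<longrightarrow> norm (ev g z - ev f z) < \<epsilon>) \<longrightarrow> g \<in> S)"
      and T: "T \<subseteq> AD \<and> (\<forall>f\<in>T. \<exists>r<1. \<exists>\<epsilon>>0. \<forall>g\<in>AD.
         (\<forall>z. norm z \<le> r \<longrightarrow> norm (ev g z - ev f z) < \<epsilon>) \<longrightarrow> g \<in> T)"
    show "S \<inter> T \<subseteq> AD \<and> (\<forall>f\<in>S \<inter> T. \<exists>r<1. \<exists>\<epsilon>>0. \<forall>g\<in>AD.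
         (\<forall>z. norm z \<le> r \<longrightarrow> norm (ev g z - ev f z) < \<epsilon>) \<longrightarrow> g \<in> S \<inter> T)"
    proof (intro conjI ballI)
      show "S \<inter> T \<subseteq> AD" using S by blast
      fix f assume "f \<in> S \<inter> T"
      then obtain r1 e1 r2 e2 where r1: "r1 < 1" "e1 > 0" "\<forall>g\<in>AD.
         (\<forall>z. norm z \<le> r1 \<longrightarrow> norm (ev g z - ev f z) < e1) \<longrightarrow> g \<in> S"
        and r2: "r2 < 1" "e2 > 0" "\<forall>g\<in>AD.
         (\<forall>z. norm z \<le> r2 \<longrightarrow> norm (ev g z - ev f z) < e2) \<longrightarrow> g \<in> T"
        using S T by blast
      show "\<exists>r<1. \<exists>\<epsilon>>0. \<forall>g\<in>AD.
         (\<forall>z. norm z \<le> r \<longrightarrow> norm (ev g z - ev f z) < \<epsilon>) \<longrightarrow> g \<in> S \<inter> T"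
        using r1 r2 by (intro exI[of _ "max r1 r2"] conjI exI[of _ "min e1 e2"]) auto
    qed
  next
    fix K :: "(nat \<Rightarrow> complex) set set"
    assume K: "\<forall>S\<in>K. S \<subseteq> AD \<and> (\<forall>f\<in>S. \<exists>r<1. \<exists>\<epsilon>>0. \<forall>g\<in>AD.
         (\<forall>z. norm z \<le> r \<longrightarrow> norm (ev g z - ev f z) < \<epsilon>) \<longrightarrow> g \<in> S)"
    show "\<Union>K \<subseteq> AD \<and> (\<forall>f\<in>\<Union>K. \<exists>r<1. \<exists>\<epsilon>>0. \<forall>g\<in>AD.
         (\<forall>z. norm z \<le> r \<longrightarrow> norm (ev g z - ev f z) < \<epsilon>) \<longrightarrow> g \<in> \<Union>K)"
    proof (intro conjI ballI)
      show "\<Union>K \<subseteq> AD" using K by blast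
      fix f assume "f \<in> \<Union>K"
      then obtain S where "S \<in> K" "f \<in> S" by blast
      then obtain r e where "r < 1" "e > 0" "\<forall>g\<in>AD.
         (\<forall>z. norm z \<le> r \<longrightarrow> norm (ev g z - ev f z) < e) \<longrightarrow> g \<in> S" using K by blast
      then show "\<exists>r<1. \<exists>\<epsilon>>0. \<forall>g\<in>AD.
         (\<forall>z. norm z \<le> r \<longrightarrow> norm (ev g z - ev f z) < \<epsilon>) \<longrightarrow> g \<in> \<Union>K"
        using \<open>S \<in> K\<close> by blast
    qed
  qed
  then show ?thesis unfolding LU_def by simp
qed

lemma coeff_est:
  assumes a: "a \<in> AD" and r: "0 < r" "r < 1" and B: "\<And>z. norm z \<le> r \<Longrightarrow> norm (ev a z) \<le> B"
  shows "norm (a k) \<le> B / r ^ k"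
proof -
  define F where "F = Abs_fps a"
  have cr: "fps_conv_radius F \<ge> 1"
    unfolding F_def fps_conv_radius_def
    by (rule conv_radius_geI_ex') (use a in \<open>auto simp: AD_def\<close>)
  have ev: "eval_fps F = ev a" unfolding F_def by (auto simp: eval_fps_def ev_def fun_eq_iff)
  have hol: "ev a holomorphic_on ball 0 1"
    unfolding ev[symmetric]
  proof (rule holomorphic_on_eval_fps, rule subsetI)
    fix x :: complex assume "x \<in> ball 0 1"
    then have e1: "ereal (norm x) < 1" by simp
    show "x \<in> eball 0 (fps_conv_radius F)" using less_le_trans[OF e1 cr] by simp
  qed
  then have "ev a holomorphic_on ball 0 r" by (rule holomorphic_on_subset) (use r in auto)
  moreover have "continuous_on (cball 0 r) (ev a)"
    using holomorphic_on_imp_continuous_on[OF hol] by (rule continuous_on_subset) (use r in auto)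
  ultimately have "norm ((deriv ^^ k) (ev a) 0) \<le> fact k * B / r ^ k"
    by (rule Cauchy_inequality) (use r B in auto)
  moreover have "a k = (deriv ^^ k) (ev a) 0 / fact k"
    using fps_nth_conv_deriv[of F k] less_le_trans[OF _ cr, of 0] unfolding ev by (simp add: F_def)
  ultimately have "fact k * norm (a k) \<le> fact k * (B / r ^ k)"
    by (simp add: norm_divide)
  moreover have "(0::real) < fact k" by simp
  ultimately show ?thesis by (metis mult_le_cancel_left_pos times_divide_eq_right)
qed

lemma compact_cover:
  assumes cV: "compactin LU V" and VA: "V \<subseteq> AD"
    and loc: "\<And>f. f \<in> V \<Longrightarrow> \<exists>r<1. \<exists>\<epsilon>>0. \<forall>f'\<in>AD.
        (\<forall>z. norm z \<le> r \<longrightarrow> norm (ev f' z - ev f z) < \<epsilon>) \<longrightarrow> P f f'"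
  shows "\<exists>F. finite F \<and> F \<subseteq> V \<and> (\<forall>f'\<in>V. \<exists>f\<in>F. P f f')"
proof -
  define U where "U f = {h\<in>AD. \<exists>r<1. \<exists>\<epsilon>>0. \<forall>g'\<in>AD.
        (\<forall>z. norm z \<le> r \<longrightarrow> norm (ev g' z - ev h z) < \<epsilon>) \<longrightarrow> P f g'}" for f
  have opn: "openin LU (U f)" for f
    unfolding openin_LU
  proof (intro conjI ballI)
    show "U f \<subseteq> AD" unfolding U_def by blast
    fix h assume "h \<in> U f"
    then obtain r e where r: "r < 1" "e > 0" and H: "\<forall>g'\<in>AD.
        (\<forall>z. norm z \<le> r \<longrightarrow> norm (ev g' z - ev h z) < e) \<longrightarrow> P f g'"
      unfolding U_def by blast
    show "\<exists>r<1. \<exists>\<epsilon>>0. \<forall>g\<in>AD.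
         (\<forall>z. norm z \<le> r \<longrightarrow> norm (ev g z - ev h z) < \<epsilon>) \<longrightarrow> g \<in> U f"
    proof (intro exI conjI ballI impI)
      show "r < 1" "e/2 > 0" by (use r in auto)
      fix g assume g: "g \<in> AD" and gz: "\<forall>z. norm z \<le> r \<longrightarrow> norm (ev g z - ev h z) < e/2"
      have "\<forall>g'\<in>AD. (\<forall>z. norm z \<le> r \<longrightarrow> norm (ev g' z - ev g z) < e/2) \<longrightarrow> P f g'"
      proof (intro ballI impI)
        fix g' assume g': "g' \<in> AD" "\<forall>z. norm z \<le> r \<longrightarrow> norm (ev g' z - ev g z) < e/2"
        have "\<forall>z. norm z \<le> r \<longrightarrow> norm (ev g' z - ev h z) < e"
        proof (intro allI impI)
          fix z :: complex assume "norm z \<le> r"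
          then have "norm (ev g' z - ev g z) < e/2" "norm (ev g z - ev h z) < e/2" using g' gz by auto
          moreover have "norm (ev g' z - ev h z) \<le> norm (ev g' z - ev g z) + norm (ev g z - ev h z)"
          proof -
            have "ev g' z - ev h z = (ev g' z - ev g z) + (ev g z - ev h z)" by simp
            then show ?thesis by (metis norm_triangle_ineq)
          qed
          ultimately show "norm (ev g' z - ev h z) < e" by linarith
        qed
        then show "P f g'" using H g' by blast
      qed
      then have "\<exists>r'<1. \<exists>\<epsilon>>0. \<forall>g'\<in>AD.
        (\<forall>z. norm z \<le> r' \<longrightarrow> norm (ev g' z - ev g z) < \<epsilon>) \<longrightarrow> P f g'"
        using r by (intro exI[of _ r] conjI exI[of _ "e/2"]) auto
      then show "g \<in> U f" unfolding U_def using g by (rule_tac CollectI, intro conjI)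
    qed
  qed
  have cov: "V \<subseteq> \<Union>(U ` V)"
  proof
    fix f assume f: "f \<in> V"
    from loc[OF f] obtain r e where "r < 1" "e > 0" "\<forall>f'\<in>AD.
        (\<forall>z. norm z \<le> r \<longrightarrow> norm (ev f' z - ev f z) < e) \<longrightarrow> P f f'" by blast
    moreover have "f \<in> AD" using f VA by blast
    ultimately have "f \<in> U f" unfolding U_def by blast
    then show "f \<in> \<Union>(U ` V)" using f by blast
  qed
  from cV have "\<forall>\<U>. (\<forall>B\<in>\<U>. openin LU B) \<and> V \<subseteq> \<Union>\<U> \<longrightarrow> (\<exists>\<F>. finite \<F> \<and> \<F> \<subseteq> \<U> \<and> V \<subseteq> \<Union>\<F>)"
    unfolding compactin_def by (rule conjunct2)
  then have "(\<forall>B\<in>U ` V. openin LU B) \<and> V \<subseteq> \<Union>(U ` V) \<longrightarrow> (\<exists>\<F>. finite \<F> \<and> \<F> \<subseteq> U ` V \<and> V \<subseteq> \<Union>\<F>)"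
    by (rule spec)
  moreover have "(\<forall>B\<in>U ` V. openin LU B) \<and> V \<subseteq> \<Union>(U ` V)" using opn cov by blast
  ultimately obtain FF where FF: "finite FF" "FF \<subseteq> U ` V" "V \<subseteq> \<Union>FF" by blast
  then obtain F where F: "F \<subseteq> V" "finite F" "FF = U ` F" by (meson finite_subset_image)
  show ?thesis
  proof (intro exI conjI ballI)
    show "finite F" "F \<subseteq> V" using F by auto
    fix f' assume "f' \<in> V"
    then obtain f where f: "f \<in> F" "f' \<in> U f" using FF F by blast
    then obtain r e where "r < 1" "e > 0" and H: "\<forall>g'\<in>AD.
        (\<forall>z. norm z \<le> r \<longrightarrow> norm (ev g' z - ev f' z) < e) \<longrightarrow> P f g'" and "f' \<in> AD"
      unfolding U_def by blast
    have "\<forall>z. norm z \<le> r \<longrightarrow> norm (ev f' z - ev f' z) < e" using \<open>e > 0\<close> by simp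
    then have "P f f'" using H \<open>f' \<in> AD\<close> by blast
    then show "\<exists>f\<in>F. P f f'" using f by blast
  qed
qed

lemma bounded_terms:
  fixes a :: "nat \<Rightarrow> complex"
  assumes "summable (\<lambda>k. a k * z ^ k)"
  shows "\<exists>C>0. \<forall>k. norm (a k) * norm z ^ k \<le> C"
proof -
  have "Bseq (\<lambda>k. a k * z ^ k)"
    using summable_LIMSEQ_zero[OF assms] by (intro convergent_imp_Bseq) (auto simp: convergent_def)
  then obtain K where "K > 0" "\<forall>k. norm (a k * z ^ k) \<le> K" by (rule BseqE)
  then show ?thesis by (intro exI[of _ K]) (auto simp: norm_mult norm_power)
qed

lemma sum_bound:
  fixes a g :: "nat \<Rightarrow> complex"
  assumes a: "\<And>k. norm (a k) \<le> B * \<tau> ^ k" and g: "\<And>k. norm (g k) * R1 ^ k \<le> C"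
    and w: "norm w \<le> \<tau>" and R1: "R1 > 0" and tau: "\<tau> > 0" and q: "\<tau>^2 / R1 < 1"
  shows "summable (\<lambda>k. norm (a k * g k * w ^ k))"
    and "norm (\<Sum>k. a k * g k * w ^ k) \<le> B * C / (1 - \<tau>^2 / R1)"
proof -
  define q where "q = \<tau>^2 / R1"
  have q0: "0 \<le> q" unfolding q_def using R1 by simp
  have q1: "q < 1" using q unfolding q_def .
  have B0: "B \<ge> 0" using a[of 0] norm_ge_zero[of "a 0"] by (simp del: norm_ge_zero)
  have C0: "C \<ge> 0" using g[of 0] norm_ge_zero[of "g 0"] by (simp del: norm_ge_zero)
  have bnd: "norm (a k * g k * w ^ k) \<le> B * C * q ^ k" for k
  proof -
    have gk: "norm (g k) \<le> C / R1 ^ k" using g[of k] R1 by (simp add: field_simps)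
    have "norm (a k * g k * w ^ k) = norm (a k) * norm (g k) * norm w ^ k"
      by (simp add: norm_mult norm_power)
    also have "\<dots> \<le> (B * \<tau> ^ k) * (C / R1 ^ k) * \<tau> ^ k"
      by (intro mult_mono a gk power_mono w) (use B0 C0 tau R1 in auto)
    also have "\<dots> = B * C * q ^ k" unfolding q_def
      by (simp add: power_divide power_mult_distrib field_simps power2_eq_square)
    finally show ?thesis .
  qed
  have sg: "summable (\<lambda>k. B * C * q ^ k)"
    using q0 q1 by (intro summable_mult summable_geometric) auto
  show sn: "summable (\<lambda>k. norm (a k * g k * w ^ k))"
    by (rule summable_comparison_test[OF _ sg]) (use bnd in auto)
  have "norm (\<Sum>k. a k * g k * w ^ k) \<le> (\<Sum>k. norm (a k * g k * w ^ k))"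
    by (rule summable_norm[OF sn])
  also have "\<dots> \<le> (\<Sum>k. B * C * q ^ k)"
    by (rule suminf_le[OF bnd sn sg])
  also have "\<dots> = B * C / (1 - q)"
    using q0 q1 by (simp add: suminf_mult suminf_geometric)
  finally show "norm (\<Sum>k. a k * g k * w ^ k) \<le> B * C / (1 - \<tau>^2 / R1)" unfolding q_def .
qed

lemma local_nz:
  fixes f g :: "nat \<Rightarrow> complex"
  assumes f: "f \<in> AD" and g: "\<And>k. norm (g k) * R1 ^ k \<le> C" and R1: "R1 > 0"
    and tau: "1 < \<tau>" and q: "\<tau>^2 / R1 < 1"
    and nz: "\<And>w. norm w \<le> 1 \<Longrightarrow> ev (hada f g) w \<noteq> 0"
  shows "\<exists>\<rho>>1. \<exists>r<1. \<exists>\<epsilon>>0. \<forall>f'\<in>AD. (\<forall>z. norm z \<le> r \<longrightarrow> norm (ev f' z - ev f z) < \<epsilon>)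
            \<longrightarrow> (\<forall>w. norm w < \<rho> \<longrightarrow> ev (hada f' g) w \<noteq> 0)"
proof -
  define r where "r = 1 / \<tau>"
  have r: "0 < r" "r < 1" using tau unfolding r_def by auto
  have "summable (\<lambda>k. f k * (complex_of_real r) ^ k)" using f r unfolding AD_def by auto
  from bounded_terms[OF this] obtain Bf where Bf: "Bf > 0" "\<forall>k. norm (f k) * norm (complex_of_real r) ^ k \<le> Bf"
    by blast
  have fb: "norm (f k) \<le> Bf * \<tau> ^ k" for k
  proof -
    have "norm (f k) * r ^ k \<le> Bf" using Bf(2) r by (simp add: abs_of_pos)
    then have "norm (f k) * (1 / \<tau>) ^ k \<le> Bf" unfolding r_def .
    then show ?thesis using tau by (simp add: power_one_over field_simps)
  qed
  have C0: "C \<ge> 0" using g[of 0] norm_ge_zero[of "g 0"] by (simp del: norm_ge_zero)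
  define Fn where "Fn = ev (hada f g)"
  have Fn_eq: "Fn w = (\<Sum>k. f k * g k * w ^ k)" for w by (simp add: Fn_def ev_def hada_def)
  have tau0: "\<tau> > 0" using tau by simp
  have "summable (\<lambda>k. norm (f k * g k * (complex_of_real \<tau>) ^ k))"
    by (rule sum_bound(1)[OF fb g _ R1 tau0 q]) (use tau in simp)
  then have sumtau: "summable (\<lambda>k. hada f g k * (complex_of_real \<tau>) ^ k)"
    unfolding hada_def by (rule summable_norm_cancel)
  define \<rho>1 where "\<rho>1 = (1 + \<tau>) / 2"
  have rho1: "1 < \<rho>1" "\<rho>1 < \<tau>" using tau unfolding \<rho>1_def by auto
  have cont: "continuous_on (cball 0 \<rho>1) Fn"
  proof (rule continuous_at_imp_continuous_on, rule ballI)
    fix x :: complex assume "x \<in> cball 0 \<rho>1"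
    then have "norm x < norm (complex_of_real \<tau>)" using rho1 tau by auto
    from isCont_powser[OF sumtau this] show "isCont Fn x" unfolding Fn_def ev_def .
  qed
  obtain \<rho>0 where rho0: "1 < \<rho>0" "\<rho>0 \<le> \<rho>1" and nz0: "\<And>w. norm w \<le> \<rho>0 \<Longrightarrow> Fn w \<noteq> 0"
  proof -
    define Z where "Z = {w \<in> cball 0 \<rho>1. Fn w = 0}"
    have "closed Z" unfolding Z_def by (rule continuous_closed_preimage_constant[OF cont closed_cball])
    then have "compact (cball 0 \<rho>1 \<inter> Z)" by (intro compact_Int_closed compact_cball)
    moreover have "cball 0 \<rho>1 \<inter> Z = Z" unfolding Z_def by blast
    ultimately have cZ: "compact Z" by simp
    show ?thesis
    proof (cases "Z = {}")
      case True
      show ?thesis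
      proof (rule that[of \<rho>1])
        fix w :: complex assume "norm w \<le> \<rho>1"
        then show "Fn w \<noteq> 0" using True unfolding Z_def by auto
      qed (use rho1 in auto)
    next
      case False
      have "continuous_on Z norm" by (intro continuous_intros)
      from continuous_attains_inf[OF cZ False this]
      obtain w0 where w0: "w0 \<in> Z" "\<And>y. y \<in> Z \<Longrightarrow> norm w0 \<le> norm y" by blast
      have w0b: "norm w0 \<le> \<rho>1" "Fn w0 = 0" using w0(1) unfolding Z_def by auto
      have w01: "norm w0 > 1"
      proof (rule ccontr)
        assume "\<not> norm w0 > 1"
        then have "Fn w0 \<noteq> 0" using nz unfolding Fn_def by simp
        then show False using w0b by simp
      qed
      show ?thesis
      proof (rule that[of "(1 + norm w0) / 2"])
        fix w :: complex assume w: "norm w \<le> (1 + norm w0) / 2"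
        show "Fn w \<noteq> 0"
        proof
          assume "Fn w = 0"
          moreover have "norm w \<le> \<rho>1"
            by (rule order.trans[OF w]) (use w0b(1) w01 in simp)
          ultimately have "w \<in> Z" unfolding Z_def by simp
          then have "norm w0 \<le> norm w" by (rule w0(2))
          then have "norm w0 \<le> (1 + norm w0) / 2" using w by simp
          then show False using w01 by simp
        qed
      qed (use w01 w0b in auto)
    qed
  qed
  have "continuous_on (cball 0 \<rho>0) (\<lambda>w. norm (Fn w))"
    by (intro continuous_on_norm continuous_on_subset[OF cont]) (use rho0 in auto)
  from continuous_attains_inf[OF compact_cball _ this]
  obtain w1 where w1: "w1 \<in> cball 0 \<rho>0" "\<And>y. y \<in> cball 0 \<rho>0 \<Longrightarrow> norm (Fn w1) \<le> norm (Fn y)"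
    using rho0 by auto
  define m where "m = norm (Fn w1)"
  have m0: "m > 0" unfolding m_def using nz0 w1(1) by auto
  have mle: "m \<le> norm (Fn w)" if "norm w \<le> \<rho>0" for w using w1(2)[of w] that unfolding m_def by auto
  define q' where "q' = \<tau>^2 / R1"
  have q'0: "q' \<ge> 0" unfolding q'_def using R1 by simp
  have q'1: "q' < 1" unfolding q'_def using q .
  define \<epsilon> where "\<epsilon> = m * (1 - q') / (2 * (C + 1))"
  have eps0: "\<epsilon> > 0" unfolding \<epsilon>_def using m0 q'1 C0 by auto
  have epsC: "\<epsilon> * C / (1 - q') < m"
  proof -
    have a1: "C / (2 * (C + 1)) < 1" using C0 by (simp add: field_simps)
    have mq: "m * (1 - q') > 0" using m0 q'1 by simp
    have "\<epsilon> * C = (m * (1 - q')) * (C / (2 * (C + 1)))" unfolding \<epsilon>_def by simp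
    also have "\<dots> < (m * (1 - q')) * 1" by (rule mult_strict_left_mono[OF a1 mq])
    finally have "\<epsilon> * C < m * (1 - q')" by simp
    then show ?thesis using q'1 by (simp add: pos_divide_less_eq)
  qed
  have main: "\<forall>f'\<in>AD. (\<forall>z. norm z \<le> r \<longrightarrow> norm (ev f' z - ev f z) < \<epsilon>)
            \<longrightarrow> (\<forall>w. norm w < \<rho>0 \<longrightarrow> ev (hada f' g) w \<noteq> 0)"
  proof (intro ballI impI allI)
    fix f' and w :: complex assume f': "f' \<in> AD" and H: "\<forall>z. norm z \<le> r \<longrightarrow> norm (ev f' z - ev f z) < \<epsilon>"
      and w: "norm w < \<rho>0"
    define d where "d k = f' k - f k" for k
    have dAD: "d \<in> AD" using f f' unfolding AD_def d_def by (auto simp: left_diff_distrib intro: summable_diff)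
    have evd: "ev d z = ev f' z - ev f z" if "norm z < 1" for z :: complex
    proof -
      have "summable (\<lambda>k. f' k * z ^ k)" "summable (\<lambda>k. f k * z ^ k)" using f f' that unfolding AD_def by auto
      then show ?thesis unfolding ev_def d_def by (simp add: left_diff_distrib suminf_diff)
    qed
    have "norm (ev d z) \<le> \<epsilon>" if "norm z \<le> r" for z :: complex
      using H that evd[of z] r by (auto intro: less_imp_le)
    from coeff_est[OF dAD r this] have db: "norm (d k) \<le> \<epsilon> * \<tau> ^ k" for k
      unfolding r_def using tau by (simp add: power_one_over)
    have wt: "norm w \<le> \<tau>" using w rho0 rho1 by linarith
    have S1: "summable (\<lambda>k. f k * g k * w ^ k)"
      by (rule summable_norm_cancel, rule sum_bound(1)[OF fb g wt R1 tau0 q])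
    have S2: "summable (\<lambda>k. d k * g k * w ^ k)"
      by (rule summable_norm_cancel, rule sum_bound(1)[OF db g wt R1 tau0 q])
    have D: "norm (\<Sum>k. d k * g k * w ^ k) \<le> \<epsilon> * C / (1 - q')"
      unfolding q'_def by (rule sum_bound(2)[OF db g wt R1 tau0 q])
    have "ev (hada f' g) w = (\<Sum>k. f k * g k * w ^ k + d k * g k * w ^ k)"
      unfolding ev_def hada_def d_def by (simp add: algebra_simps)
    also have "\<dots> = Fn w + (\<Sum>k. d k * g k * w ^ k)"
      unfolding Fn_eq by (rule suminf_add[OF S1 S2, symmetric])
    finally have eq: "ev (hada f' g) w = Fn w + (\<Sum>k. d k * g k * w ^ k)" .
    have "m \<le> norm (Fn w)" using mle w by simp
    moreover have "norm (Fn w) \<le> norm (ev (hada f' g) w) + norm (\<Sum>k. d k * g k * w ^ k)"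
      unfolding eq by (metis add_diff_cancel_right' norm_triangle_ineq4)
    ultimately show "ev (hada f' g) w \<noteq> 0" using D epsC by auto
  qed
  show ?thesis using main rho0(1) r(2) eps0 by blast
qed

lemma ev_hada_Px: "ev (hada (Px x f) g) 1 = ev (hada f g) x"
  by (simp add: ev_def hada_def Px_def mult_ac)

lemma ev_hada_Px2: "ev (hada f (Px x g)) z = ev (hada f g) (x * z)"
  by (simp add: ev_def hada_def Px_def power_mult_distrib mult_ac)

lemma diff_coeff:
  assumes f: "f \<in> AD" and f': "f' \<in> AD" and r: "0 < r" "r < 1"
    and H: "\<forall>z. norm z \<le> r \<longrightarrow> norm (ev f' z - ev f z) < \<epsilon>"
  shows "norm (f' k - f k) \<le> \<epsilon> / r ^ k"
proof -
  define d where "d k = f' k - f k" for k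
  have dAD: "d \<in> AD" using f f' unfolding AD_def d_def by (auto simp: left_diff_distrib intro: summable_diff)
  have evd: "ev d z = ev f' z - ev f z" if "norm z < 1" for z :: complex
  proof -
    have "summable (\<lambda>k. f' k * z ^ k)" "summable (\<lambda>k. f k * z ^ k)" using f f' that unfolding AD_def by auto
    then show ?thesis unfolding ev_def d_def by (simp add: left_diff_distrib suminf_diff)
  qed
  have "norm (ev d z) \<le> \<epsilon>" if "norm z \<le> r" for z :: complex
    using H that evd[of z] r by (auto intro: less_imp_le)
  from coeff_est[OF dAD r this] show ?thesis unfolding d_def .
qed

lemma dual_star_nontriv:
  assumes VAD: "V \<subseteq> A0" and cV: "compactin LU V"
  shows "dual_star V \<noteq> {one_fn}"
proof -
  have VA: "V \<subseteq> AD" using VAD unfolding A0_def by blast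
  have loc: "\<exists>r<1. \<exists>\<epsilon>>0. \<forall>f'\<in>AD.
        (\<forall>z. norm z \<le> r \<longrightarrow> norm (ev f' z - ev f z) < \<epsilon>) \<longrightarrow> norm (f' 1) \<le> norm (f 1) + 1"
    if f: "f \<in> V" for f
  proof -
    have "\<forall>f'\<in>AD. (\<forall>z. norm z \<le> 1/2 \<longrightarrow> norm (ev f' z - ev f z) < 1/4) \<longrightarrow> norm (f' 1) \<le> norm (f 1) + 1"
    proof (intro ballI impI)
      fix f' assume f': "f' \<in> AD" and H: "\<forall>z. norm z \<le> 1/2 \<longrightarrow> norm (ev f' z - ev f z) < 1/4"
      have "norm (f' 1 - f 1) \<le> (1/4) / (1/2) ^ 1"
        by (rule diff_coeff[OF _ f' _ _ H]) (use f VA in auto)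
      then have "norm (f' 1 - f 1) \<le> 1" by simp
      moreover have "norm (f' 1) \<le> norm (f 1) + norm (f' 1 - f 1)"
        by (metis add.commute diff_add_cancel norm_triangle_ineq)
      ultimately show "norm (f' 1) \<le> norm (f 1) + 1" by simp
    qed
    then have "\<exists>\<epsilon>>0. \<forall>f'\<in>AD. (\<forall>z. norm z \<le> 1/2 \<longrightarrow> norm (ev f' z - ev f z) < \<epsilon>) \<longrightarrow> norm (f' 1) \<le> norm (f 1) + 1"
      by (rule_tac exI[of _ "1/4::real"]) simp
    then show ?thesis by (rule_tac exI[of _ "1/2::real"]) simp
  qed
  from compact_cover[where P="\<lambda>f f'. norm (f' 1) \<le> norm (f 1) + 1", OF cV VA loc]
  obtain F where F: "finite F" "F \<subseteq> V" "\<forall>f'\<in>V. \<exists>f\<in>F. norm (f' 1) \<le> norm (f 1) + 1" by blast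
  define M where "M = Max (insert 0 ((\<lambda>f. norm (f 1) + 1) ` F))"
  have M0: "M \<ge> 0" unfolding M_def using F(1) by simp
  have Mb: "norm (f' 1) \<le> M" if fV: "f' \<in> V" for f'
  proof -
    obtain f where "f \<in> F" "norm (f' 1) \<le> norm (f 1) + 1" using bspec[OF F(3) fV] by (elim bexE)
    moreover have "norm (f 1) + 1 \<le> M" unfolding M_def using F(1) \<open>f \<in> F\<close> by (intro Max_ge) auto
    ultimately show ?thesis by simp
  qed
  define c :: complex where "c = of_real (1 / (2 * (M + 1)))"
  define h where "h k = (if k = 0 then 1 else if k = 1 then c else 0)" for k :: nat
  have fin: "\<And>a :: nat \<Rightarrow> complex. \<And>n. n \<notin> {0, 1} \<Longrightarrow> h n * a n = 0" unfolding h_def by auto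
  have hAD: "h \<in> A0"
    unfolding A0_def AD_def
  proof (intro CollectI conjI allI impI)
    fix z :: complex
    show "summable (\<lambda>k. h k * z ^ k)" by (rule summable_finite[of "{0,1}"]) (use fin in auto)
  qed (simp add: h_def)
  have hstar: "h \<in> dual_star V"
    unfolding dual_star_def
  proof (intro CollectI conjI ballI allI impI)
    show "h \<in> A0" by (rule hAD)
    fix f z assume f: "f \<in> V" and z: "norm (z::complex) < 1"
    have "ev (hada f h) z = (\<Sum>n\<in>{0,1}. hada f h n * z ^ n)"
      unfolding ev_def by (rule suminf_finite) (auto simp: hada_def h_def)
    also have "\<dots> = f 0 + f 1 * c * z" by (simp add: hada_def h_def)
    also have "f 0 = 1" using f VAD unfolding A0_def by auto
    finally have eq: "ev (hada f h) z = 1 + f 1 * c * z" .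
    have nc: "norm c = 1 / (2 * (M + 1))" unfolding c_def norm_of_real using M0 by simp
    have "norm (f 1 * c * z) = norm (f 1) * (1 / (2 * (M + 1))) * norm z" by (simp only: norm_mult nc)
    also have "\<dots> \<le> M * (1 / (2 * (M + 1))) * 1"
      by (intro mult_mono Mb f) (use z M0 in auto)
    also have "\<dots> < 1" using M0 by (simp add: field_simps)
    finally have lt: "norm (f 1 * c * z) < 1" .
    show "ev (hada f h) z \<noteq> 0"
    proof
      assume "ev (hada f h) z = 0"
      then have "f 1 * c * z = -1" unfolding eq by (simp add: add_eq_0_iff)
      then show False using lt by simp
    qed
  qed
  have "h \<noteq> one_fn"
  proof
    assume "h = one_fn"
    then have "h 1 = one_fn 1" by simp
    moreover have "norm c \<noteq> 0" unfolding c_def norm_of_real using M0 by simp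
    then have "c \<noteq> 0" by auto
    ultimately show False unfolding h_def one_fn_def by simp
  qed
  then show ?thesis using hstar by blast
qed

theorem theorem6:
  assumes "V \<subseteq> A0" and "compactin LU V"
  shows "bor (dual_star V) = dual_star V - dual_T (cm V)"
proof -
  note VA0 = assms(1) and cV = assms(2)
  have VA: "V \<subseteq> AD" using VA0 unfolding A0_def by blast
  have bor_eq: "bor (dual_star V) = {f \<in> dual_star V. \<forall>g\<in>dual_star V. \<forall>x. norm x \<le> 1 \<longrightarrow> f = Px x g \<longrightarrow> norm x = 1}"
    unfolding bor_def using dual_star_nontriv[OF VA0 cV] by simp
  show ?thesis
  proof (rule set_eqI, rule iffI)
    fix g assume "g \<in> bor (dual_star V)"
    then have gs: "g \<in> dual_star V" and border: "\<And>h x. h \<in> dual_star V \<Longrightarrow> norm x \<le> 1 \<Longrightarrow> g = Px x h \<Longrightarrow> norm x = 1"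
      unfolding bor_eq by auto
    show "g \<in> dual_star V - dual_T (cm V)"
    proof (rule DiffI[OF gs], rule notI)
      assume gT: "g \<in> dual_T (cm V)"
      then have "g \<in> AcD" and g0: "g 0 = 1" unfolding dual_T_def A0cD_def by auto
      then obtain R where R: "R > 1" and Rs: "\<And>z. norm z < R \<Longrightarrow> summable (\<lambda>k. g k * z ^ k)"
        unfolding AcD_def by blast
      define R1 where "R1 = (1 + R) / 2"
      have R1: "1 < R1" "R1 < R" using R unfolding R1_def by auto
      have "summable (\<lambda>k. g k * (complex_of_real R1) ^ k)" using Rs R1 by simp
      from bounded_terms[OF this] obtain C where C: "\<And>k. norm (g k) * R1 ^ k \<le> C"
        using R1 by (auto simp: abs_of_pos)
      define \<tau> where "\<tau> = sqrt (sqrt R1)"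
      have sR: "1 < sqrt R1" using R1 by simp
      have tau1: "1 < \<tau>" unfolding \<tau>_def using sR by simp
      have tau2: "\<tau>^2 = sqrt R1" unfolding \<tau>_def using sR by simp
      have "sqrt R1 * 1 < sqrt R1 * sqrt R1" using sR by (intro mult_strict_left_mono) auto
      then have sRR: "sqrt R1 < R1" using R1 by simp
      have q: "\<tau>^2 / R1 < 1" using tau2 sRR R1 by simp
      have "\<tau> * 1 < \<tau> * \<tau>" using tau1 by (intro mult_strict_left_mono) auto
      then have tauR: "\<tau> < R" using tau2 sRR R1 by (simp add: power2_eq_square)
      have R10: "R1 > 0" using R1 by simp
      have nz: "\<And>w. norm w \<le> 1 \<Longrightarrow> ev (hada f g) w \<noteq> 0" if f: "f \<in> V" for f
      proof -
        fix w :: complex assume "norm w \<le> 1"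
        then have "Px w f \<in> cm V" unfolding cm_def using f by blast
        then have "ev (hada (Px w f) g) 1 \<noteq> 0" using gT unfolding dual_T_def by blast
        then show "ev (hada f g) w \<noteq> 0" by (simp add: ev_hada_Px)
      qed
      have "\<forall>f\<in>V. \<exists>\<rho>>1. \<exists>r<1. \<exists>\<epsilon>>0. \<forall>f'\<in>AD. (\<forall>z. norm z \<le> r \<longrightarrow> norm (ev f' z - ev f z) < \<epsilon>)
            \<longrightarrow> (\<forall>w. norm w < \<rho> \<longrightarrow> ev (hada f' g) w \<noteq> 0)"
      proof
        fix f assume f: "f \<in> V"
        show "\<exists>\<rho>>1. \<exists>r<1. \<exists>\<epsilon>>0. \<forall>f'\<in>AD. (\<forall>z. norm z \<le> r \<longrightarrow> norm (ev f' z - ev f z) < \<epsilon>)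
            \<longrightarrow> (\<forall>w. norm w < \<rho> \<longrightarrow> ev (hada f' g) w \<noteq> 0)"
          by (rule local_nz[OF _ C R10 tau1 q nz[OF f]]) (use f VA in auto)
      qed
      then obtain \<rho>f where rf: "\<And>f. f \<in> V \<Longrightarrow> \<rho>f f > 1"
        and rloc: "\<And>f. f \<in> V \<Longrightarrow> \<exists>r<1. \<exists>\<epsilon>>0. \<forall>f'\<in>AD. (\<forall>z. norm z \<le> r \<longrightarrow> norm (ev f' z - ev f z) < \<epsilon>)
            \<longrightarrow> (\<forall>w. norm w < \<rho>f f \<longrightarrow> ev (hada f' g) w \<noteq> 0)"
        by metis
      from compact_cover[where P="\<lambda>f f'. \<forall>w. norm w < \<rho>f f \<longrightarrow> ev (hada f' g) w \<noteq> 0", OF cV VA rloc]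
      obtain F where F: "finite F" "F \<subseteq> V" and Fc: "\<forall>f'\<in>V. \<exists>f\<in>F. \<forall>w. norm w < \<rho>f f \<longrightarrow> ev (hada f' g) w \<noteq> 0"
        by blast
      define \<rho> where "\<rho> = Min (insert \<tau> (\<rho>f ` F))"
      have rho1: "1 < \<rho>" unfolding \<rho>_def using F rf tau1 by (subst Min_gr_iff) auto
      have rhot: "\<rho> \<le> \<tau>" unfolding \<rho>_def using F by (intro Min_le) auto
      have rhof: "\<rho> \<le> \<rho>f f" if "f \<in> F" for f unfolding \<rho>_def using F that by (intro Min_le) auto
      define h where "h = Px (complex_of_real \<rho>) g"
      have hA0: "h \<in> A0"
        unfolding A0_def AD_def
      proof (intro CollectI conjI allI impI)
        fix z :: complex assume z: "norm z < 1"
        have "norm (complex_of_real \<rho> * z) < R"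
        proof -
          have "norm (complex_of_real \<rho> * z) = \<rho> * norm z" using rho1 by (simp add: norm_mult)
          also have "\<dots> \<le> \<rho>" using z rho1 by (simp add: mult_left_le)
          finally show ?thesis using rhot tauR by simp
        qed
        from Rs[OF this] show "summable (\<lambda>k. h k * z ^ k)"
          unfolding h_def Px_def by (simp add: power_mult_distrib mult_ac)
      qed (simp add: h_def Px_def g0)
      have hs: "h \<in> dual_star V"
        unfolding dual_star_def
      proof (intro CollectI conjI ballI allI impI)
        show "h \<in> A0" by (rule hA0)
        fix f' z assume f': "f' \<in> V" and z: "norm (z::complex) < 1"
        obtain f where f: "f \<in> F" "\<forall>w. norm w < \<rho>f f \<longrightarrow> ev (hada f' g) w \<noteq> 0" using bspec[OF Fc f'] by (elim bexE)
        have "norm (complex_of_real \<rho> * z) < \<rho>f f"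
        proof -
          have "norm (complex_of_real \<rho> * z) = \<rho> * norm z" using rho1 by (simp add: norm_mult)
          also have "\<dots> < \<rho>" using z rho1 by simp
          finally show ?thesis using rhof[OF f(1)] by simp
        qed
        then show "ev (hada f' h) z \<noteq> 0" using f(2) unfolding h_def ev_hada_Px2 by blast
      qed
      have "g = Px (complex_of_real (1 / \<rho>)) h"
      proof (rule ext)
        fix k
        have "Px (complex_of_real (1 / \<rho>)) h k = g k * (complex_of_real \<rho> ^ k * complex_of_real (1 / \<rho>) ^ k)"
          by (simp add: Px_def h_def mult.assoc)
        also have "\<dots> = g k * (complex_of_real \<rho> * complex_of_real (1 / \<rho>)) ^ k"
          by (simp only: power_mult_distrib)
        also have "complex_of_real \<rho> * complex_of_real (1 / \<rho>) = 1"
          using rho1 by (simp flip: of_real_mult)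
        finally show "g k = Px (complex_of_real (1 / \<rho>)) h k" by simp
      qed
      moreover have "norm (complex_of_real (1 / \<rho>)) = 1 / \<rho>" using rho1 by (simp add: norm_divide)
      ultimately have "1 / \<rho> \<le> 1 \<Longrightarrow> 1 / \<rho> = 1" using border[OF hs] by metis
      moreover have "1 / \<rho> < 1" using rho1 by simp
      ultimately show False by simp
    qed
  next
    fix g assume "g \<in> dual_star V - dual_T (cm V)"
    then have gs: "g \<in> dual_star V" and gT: "g \<notin> dual_T (cm V)" by auto
    have "\<forall>h\<in>dual_star V. \<forall>x. norm x \<le> 1 \<longrightarrow> g = Px x h \<longrightarrow> norm x = 1"
    proof (intro ballI allI impI)
      fix h x assume hs: "h \<in> dual_star V" and x1: "norm x \<le> 1" and gh: "g = Px x h"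
      show "norm x = 1"
      proof (rule ccontr)
        assume "norm x \<noteq> 1"
        then have x: "norm x < 1" using x1 by simp
        have hA: "h \<in> AD" "h 0 = 1" using hs unfolding dual_star_def A0_def by auto
        have "g \<in> dual_T (cm V)"
          unfolding dual_T_def
        proof (intro CollectI conjI ballI)
          define R where "R = (if x = 0 then 2 else 1 / norm x)"
          have R1: "R > 1" unfolding R_def using x by (auto simp: field_simps)
          have xz: "norm (x * z) < 1" if "norm z < R" for z
          proof (cases "x = 0")
            case True then show ?thesis by simp
          next
            case False
            then have "norm z < 1 / norm x" using that unfolding R_def by simp
            then have "norm x * norm z < 1" using False by (simp add: field_simps)
            then show ?thesis by (simp add: norm_mult)
          qed
          show "g \<in> A0cD"
            unfolding A0cD_def AcD_def
          proof (intro CollectI conjI exI[of _ R] allI impI)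
            show "1 < R" by (rule R1)
            fix z :: complex assume "norm z < R"
            from xz[OF this] hA(1) have "summable (\<lambda>k. h k * (x * z) ^ k)" unfolding AD_def by blast
            then show "summable (\<lambda>k. g k * z ^ k)" unfolding gh Px_def by (simp add: power_mult_distrib mult_ac)
          qed (simp add: gh Px_def hA(2))
          fix f' assume "f' \<in> cm V"
          then obtain f y where f: "f \<in> V" and y: "norm y \<le> 1" and f'e: "f' = Px y f" unfolding cm_def by blast
          have "norm (x * y) < 1"
          proof -
            have "norm (x * y) = norm x * norm y" by (simp add: norm_mult)
            also have "\<dots> \<le> norm x" using y by (simp add: mult_left_le)
            finally show ?thesis using x by simp
          qed
          then have nz: "ev (hada f h) (x * y) \<noteq> 0" using hs f unfolding dual_star_def by blast
          have e1: "ev (hada f' g) 1 = ev (hada f g) y" unfolding f'e by (rule ev_hada_Px)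
          have e2: "ev (hada f g) y = ev (hada f h) (x * y)" unfolding gh by (rule ev_hada_Px2)
          show "ev (hada f' g) 1 \<noteq> 0" using nz unfolding e1 e2 .
        qed
        with gT show False by blast
      qed
    qed
    then show "g \<in> bor (dual_star V)" unfolding bor_eq using gs by blast
  qed
qed

end
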